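(* Let $X$ be a connected graph that is either a tree or a unicyclic graph whose unique cycle has odd length, and let $\{a,b\},\{\alpha,\beta\}\in E(X)$. Then perfect state transfer occurs between $\mathbf e_a+\mathbf e_b$ and $\mathbf e_\alpha+\mathbf e_\beta$ in $X$ with Hamiltonian $Q$ if and only if perfect state transfer occurs between the vertex states $\mathbf f_{ab}$ and $\mathbf f_{\alpha\beta}$ in the line graph $\mathcal L(X)$ with adjacency Hamiltonian.
   Context: $Q=D+A$ is the signless Laplacian. The line graph $\mathcal L(X)$ has vertex set $E(X)$, edges adjacent iff they share an endpoint; $\mathbf f_{ab}$ is the vertex state of the vertex of $\mathcal L(X)$ corresponding to $\{a,b\}$. Perfect state transfer from $\mathbf u$ to $\boldsymbol\mu$ with Hamiltonian $M$: $e^{-\mathrm{i}\tau M}\mathbf u=\eta\boldsymbol\mu$ for some $\tau>0$, $|\eta|=1$. *)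

theory Defs
  imports Complex_Main
begin

definition simple_graph :: "'v set \<Rightarrow> 'v set set \<Rightarrow> bool" where
  "simple_graph V E \<longleftrightarrow> finite V \<and> (\<forall>e\<in>E. e \<subseteq> V \<and> card e = 2)"

definition adj :: "'v set set \<Rightarrow> 'v \<Rightarrow> 'v \<Rightarrow> bool" where
  "adj E x y \<longleftrightarrow> {x, y} \<in> E"

definition connected_graph :: "'v set \<Rightarrow> 'v set set \<Rightarrow> bool" where
  "connected_graph V E \<longleftrightarrow> V \<noteq> {} \<and> (\<forall>x\<in>V. \<forall>y\<in>V. (adj E)\<^sup>*\<^sup>* x y)"

definition is_cycle :: "'v set set \<Rightarrow> 'v list \<Rightarrow> bool" where
  "is_cycle E vs \<longleftrightarrow> length vs \<ge> 3 \<and> distinct vs \<and>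
     (\<forall>i < length vs. {vs ! i, vs ! ((i + 1) mod length vs)} \<in> E)"

definition cycle_edges :: "'v list \<Rightarrow> 'v set set" where
  "cycle_edges vs = {{vs ! i, vs ! ((i + 1) mod length vs)} | i. i < length vs}"

definition is_tree :: "'v set \<Rightarrow> 'v set set \<Rightarrow> bool" where
  "is_tree V E \<longleftrightarrow> connected_graph V E \<and> \<not> (\<exists>vs. is_cycle E vs)"

definition odd_unicyclic :: "'v set \<Rightarrow> 'v set set \<Rightarrow> bool" where
  "odd_unicyclic V E \<longleftrightarrow> connected_graph V E \<and>
     (\<exists>C. (\<exists>vs. is_cycle E vs \<and> cycle_edges vs = C) \<and>
          (\<forall>vs. is_cycle E vs \<longrightarrow> cycle_edges vs = C) \<and> odd (card C))"

definition mmult :: "'a set \<Rightarrow> ('a \<Rightarrow> 'a \<Rightarrow> complex) \<Rightarrow> ('a \<Rightarrow> 'a \<Rightarrow> complex) \<Rightarrow> ('a \<Rightarrow> 'a \<Rightarrow> complex)" where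
  "mmult W M N = (\<lambda>i j. \<Sum>k\<in>W. M i k * N k j)"

primrec mpow :: "'a set \<Rightarrow> ('a \<Rightarrow> 'a \<Rightarrow> complex) \<Rightarrow> nat \<Rightarrow> ('a \<Rightarrow> 'a \<Rightarrow> complex)" where
  "mpow W M 0 = (\<lambda>i j. if i = j then 1 else 0)"
| "mpow W M (Suc n) = mmult W M (mpow W M n)"

definition mexp :: "'a set \<Rightarrow> ('a \<Rightarrow> 'a \<Rightarrow> complex) \<Rightarrow> ('a \<Rightarrow> 'a \<Rightarrow> complex)" where
  "mexp W M = (\<lambda>i j. \<Sum>n. mpow W M n i j / of_nat (fact n))"

definition evol :: "'a set \<Rightarrow> ('a \<Rightarrow> 'a \<Rightarrow> complex) \<Rightarrow> real \<Rightarrow> ('a \<Rightarrow> 'a \<Rightarrow> complex)" where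
  "evol W M t = mexp W (\<lambda>i j. - \<i> * of_real t * M i j)"

definition PST :: "'a set \<Rightarrow> ('a \<Rightarrow> 'a \<Rightarrow> complex) \<Rightarrow> ('a \<Rightarrow> complex) \<Rightarrow> ('a \<Rightarrow> complex) \<Rightarrow> bool" where
  "PST W M u \<mu> \<longleftrightarrow> (\<exists>\<tau>::real. \<tau> > 0 \<and> (\<exists>\<eta>. cmod \<eta> = 1 \<and>
      (\<forall>i\<in>W. (\<Sum>j\<in>W. evol W M \<tau> i j * u j) = \<eta> * \<mu> i)))"

definition degree :: "'v set set \<Rightarrow> 'v \<Rightarrow> nat" where
  "degree E x = card {e \<in> E. x \<in> e}"

definition signless_laplacian :: "'v set set \<Rightarrow> 'v \<Rightarrow> 'v \<Rightarrow> complex" where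
  "signless_laplacian E i j =
     (if i = j then of_nat (degree E i) else if {i, j} \<in> E then 1 else 0)"

definition line_graph_adj :: "'v set set \<Rightarrow> 'v set \<Rightarrow> 'v set \<Rightarrow> complex" where
  "line_graph_adj E e f = (if e \<noteq> f \<and> e \<inter> f \<noteq> {} then 1 else 0)"

definition basis_vec :: "'a \<Rightarrow> 'a \<Rightarrow> complex" where
  "basis_vec a = (\<lambda>i. if i = a then 1 else 0)"

end

theory Submission
  imports Defs
begin


lemma mpow_bound:
  assumes "finite W" "i \<in> W"
  shows "norm (mpow W M n i j) \<le> (\<Sum>k\<in>W. \<Sum>l\<in>W. norm (M k l)) ^ n"
  using assms(2)
proof (induction n arbitrary: i)
  case 0 then show ?case by simp
next
  case (Suc n)
  define K where "K = (\<Sum>k\<in>W. \<Sum>l\<in>W. norm (M k l))"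
  have K0: "0 \<le> K" unfolding K_def by (simp add: sum_nonneg)
  have "norm (mpow W M (Suc n) i j) = norm (\<Sum>k\<in>W. M i k * mpow W M n k j)"
    by (simp add: mmult_def)
  also have "\<dots> \<le> (\<Sum>k\<in>W. norm (M i k) * norm (mpow W M n k j))"
    by (rule order_trans[OF norm_sum]) (simp add: norm_mult)
  also have "\<dots> \<le> (\<Sum>k\<in>W. norm (M i k) * K ^ n)"
    by (rule sum_mono, rule mult_left_mono) (use Suc.IH in \<open>auto simp: K_def\<close>)
  also have "\<dots> = (\<Sum>k\<in>W. norm (M i k)) * K ^ n" by (simp add: sum_distrib_right)
  also have "\<dots> \<le> K * K ^ n"
    apply (rule mult_right_mono)
    unfolding K_def
     apply (rule member_le_sum[where f="\<lambda>i. \<Sum>k\<in>W. norm (M i k)", OF Suc.prems])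
    using assms(1) by (auto simp: sum_nonneg)
  finally show ?case by (simp add: K_def)
qed

lemma mpow_summable_norm:
  assumes "finite W" "i \<in> W"
  shows "summable (\<lambda>n. norm (mpow W M n i j / of_nat (fact n)))"
proof (rule summable_comparison_test[where g="\<lambda>n. inverse (fact n) * (\<Sum>k\<in>W. \<Sum>l\<in>W. norm (M k l)) ^ n"])
  show "summable (\<lambda>n. inverse (fact n) * (\<Sum>k\<in>W. \<Sum>l\<in>W. norm (M k l)) ^ n :: real)"
    by (rule summable_exp)
  show "\<exists>N. \<forall>n\<ge>N. norm (norm (mpow W M n i j / of_nat (fact n))) \<le> inverse (fact n) * (\<Sum>k\<in>W. \<Sum>l\<in>W. norm (M k l)) ^ n"
  proof (intro exI allI impI)
    fix n :: nat
    have "norm (norm (mpow W M n i j / of_nat (fact n))) = norm (mpow W M n i j) * inverse (fact n)"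
      by (simp add: norm_divide divide_inverse norm_mult norm_inverse)
    also have "\<dots> \<le> (\<Sum>k\<in>W. \<Sum>l\<in>W. norm (M k l)) ^ n * inverse (fact n)"
      by (rule mult_right_mono[OF mpow_bound[OF assms]]) simp
    finally show "norm (norm (mpow W M n i j / of_nat (fact n))) \<le> inverse (fact n) * (\<Sum>k\<in>W. \<Sum>l\<in>W. norm (M k l)) ^ n"
      by (simp add: mult.commute)
  qed
qed

lemma mpow_summable:
  assumes "finite W" "i \<in> W"
  shows "summable (\<lambda>n. mpow W M n i j / of_nat (fact n))"
  using summable_norm_cancel[OF mpow_summable_norm[OF assms]] .

lemma mpow_intertwine:
  fixes N :: "'a \<Rightarrow> 'b \<Rightarrow> complex"
  assumes fin: "finite V" "finite E"
    and hyp: "\<And>i f. i \<in> V \<Longrightarrow> f \<in> E \<Longrightarrow> (\<Sum>k\<in>V. P i k * N k f) = (\<Sum>g\<in>E. N i g * R g f)"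
    and "i \<in> V" "e \<in> E"
  shows "(\<Sum>j\<in>V. mpow V P n i j * N j e) = (\<Sum>f\<in>E. N i f * mpow E R n f e)"
  using assms(4)
proof (induction n arbitrary: i)
  case 0
  have "(\<Sum>j\<in>V. mpow V P 0 i j * N j e) = (\<Sum>j\<in>V. if j = i then N j e else 0)"
    by (intro sum.cong) auto
  also have "\<dots> = N i e" using fin 0 by (simp add: sum.delta')
  moreover have "(\<Sum>f\<in>E. N i f * mpow E R 0 f e) = (\<Sum>f\<in>E. if f = e then N i f else 0)"
    by (intro sum.cong) auto
  ultimately show ?case using fin assms(5) by (simp add: sum.delta')
next
  case (Suc n)
  have "(\<Sum>j\<in>V. mpow V P (Suc n) i j * N j e) = (\<Sum>j\<in>V. \<Sum>k\<in>V. P i k * (mpow V P n k j * N j e))"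
    by (simp add: mmult_def sum_distrib_right mult.assoc)
  also have "\<dots> = (\<Sum>k\<in>V. P i k * (\<Sum>j\<in>V. mpow V P n k j * N j e))"
    by (subst sum.swap) (simp add: sum_distrib_left)
  also have "\<dots> = (\<Sum>k\<in>V. P i k * (\<Sum>f\<in>E. N k f * mpow E R n f e))"
    using Suc.IH by simp
  also have "\<dots> = (\<Sum>f\<in>E. (\<Sum>k\<in>V. P i k * N k f) * mpow E R n f e)"
    by (simp add: sum_distrib_left sum_distrib_right mult.assoc) (rule sum.swap)
  also have "\<dots> = (\<Sum>f\<in>E. (\<Sum>g\<in>E. N i g * R g f) * mpow E R n f e)"
    using hyp[OF Suc.prems] by simp
  also have "\<dots> = (\<Sum>g\<in>E. N i g * (\<Sum>f\<in>E. R g f * mpow E R n f e))"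
    by (simp add: sum_distrib_left sum_distrib_right mult.assoc) (rule sum.swap)
  also have "\<dots> = (\<Sum>f\<in>E. N i f * mpow E R (Suc n) f e)"
    by (simp add: mmult_def)
  finally show ?case .
qed

lemma mexp_intertwine:
  fixes N :: "'a \<Rightarrow> 'b \<Rightarrow> complex"
  assumes fin: "finite V" "finite E"
    and hyp: "\<And>i f. i \<in> V \<Longrightarrow> f \<in> E \<Longrightarrow> (\<Sum>k\<in>V. P i k * N k f) = (\<Sum>g\<in>E. N i g * R g f)"
    and iV: "i \<in> V" and eE: "e \<in> E"
  shows "(\<Sum>j\<in>V. mexp V P i j * N j e) = (\<Sum>f\<in>E. N i f * mexp E R f e)"
proof -
  have "(\<Sum>j\<in>V. mexp V P i j * N j e) = (\<Sum>j\<in>V. \<Sum>n. mpow V P n i j / of_nat (fact n) * N j e)"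
    unfolding mexp_def by (intro sum.cong refl suminf_mult2 mpow_summable[OF fin(1) iV])
  also have "\<dots> = (\<Sum>n. \<Sum>j\<in>V. mpow V P n i j / of_nat (fact n) * N j e)"
    by (rule suminf_sum[symmetric]) (intro summable_mult2 mpow_summable[OF fin(1) iV])
  also have "\<dots> = (\<Sum>n. (\<Sum>j\<in>V. mpow V P n i j * N j e) / of_nat (fact n))"
    by (simp add: sum_divide_distrib)
  also have "\<dots> = (\<Sum>n. (\<Sum>f\<in>E. N i f * mpow E R n f e) / of_nat (fact n))"
    by (subst mpow_intertwine[OF fin hyp iV eE]) simp_all
  also have "\<dots> = (\<Sum>n. \<Sum>f\<in>E. N i f * (mpow E R n f e / of_nat (fact n)))"
    by (simp add: sum_divide_distrib)
  also have "\<dots> = (\<Sum>f\<in>E. \<Sum>n. N i f * (mpow E R n f e / of_nat (fact n)))"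
    by (rule suminf_sum) (intro summable_mult mpow_summable[OF fin(2)], simp)
  also have "\<dots> = (\<Sum>f\<in>E. N i f * mexp E R f e)"
    unfolding mexp_def
  proof (intro sum.cong refl)
    fix f assume "f \<in> E"
    show "(\<Sum>n. N i f * (mpow E R n f e / of_nat (fact n))) = N i f * (\<Sum>n. mpow E R n f e / of_nat (fact n))"
      by (rule suminf_mult, rule mpow_summable[OF fin(2) \<open>f \<in> E\<close>])
  qed
  finally show ?thesis .
qed



lemma binom_step:
  fixes p :: "nat \<Rightarrow> complex" and d :: complex
  shows "(\<Sum>l\<le>n. of_nat (n choose l) * d ^ (n - l) * p (Suc l)) + d * (\<Sum>l\<le>n. of_nat (n choose l) * d ^ (n - l) * p l)
       = (\<Sum>l\<le>Suc n. of_nat (Suc n choose l) * d ^ (Suc n - l) * p l)"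
proof -
  have 1: "d * (\<Sum>l\<le>n. of_nat (n choose l) * d ^ (n - l) * p l) = (\<Sum>l\<le>Suc n. of_nat (n choose l) * d ^ (Suc n - l) * p l)"
  proof -
    have "d * (\<Sum>l\<le>n. of_nat (n choose l) * d ^ (n - l) * p l) = (\<Sum>l\<le>n. of_nat (n choose l) * d ^ (Suc n - l) * p l)"
      by (simp add: sum_distrib_left Suc_diff_le mult_ac)
    also have "\<dots> = (\<Sum>l\<le>Suc n. of_nat (n choose l) * d ^ (Suc n - l) * p l)"
      by simp
    finally show ?thesis .
  qed
  have 2: "(\<Sum>l\<le>Suc n. of_nat (n choose l) * d ^ (Suc n - l) * p l) = d ^ Suc n * p 0 + (\<Sum>l\<le>n. of_nat (n choose Suc l) * d ^ (n - l) * p (Suc l))"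
    by (subst sum.atMost_Suc_shift) simp
  have 3: "(\<Sum>l\<le>Suc n. of_nat (Suc n choose l) * d ^ (Suc n - l) * p l) = d ^ Suc n * p 0 + (\<Sum>l\<le>n. (of_nat (n choose l) + of_nat (n choose Suc l)) * d ^ (n - l) * p (Suc l))"
    by (subst sum.atMost_Suc_shift) simp
  show ?thesis
    unfolding 1 2 3 by (simp add: distrib_right sum.distrib)
qed

lemma mpow_shift:
  assumes fin: "finite W" and hyp: "\<And>i j. i \<in> W \<Longrightarrow> j \<in> W \<Longrightarrow> M' i j = M i j + (if i = j then d else 0)"
    and "i \<in> W"
  shows "mpow W M' n i j = (\<Sum>l\<le>n. of_nat (n choose l) * d ^ (n - l) * mpow W M l i j)"
  using assms(3)
proof (induction n arbitrary: i)
  case 0 then show ?case by simp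
next
  case (Suc n)
  have "mpow W M' (Suc n) i j = (\<Sum>k\<in>W. (M i k + (if i = k then d else 0)) * mpow W M' n k j)"
    using hyp[OF Suc.prems] by (simp add: mmult_def)
  also have "\<dots> = (\<Sum>k\<in>W. M i k * mpow W M' n k j) + d * mpow W M' n i j"
  proof -
    have "(\<Sum>k\<in>W. (M i k + (if i = k then d else 0)) * mpow W M' n k j)
        = (\<Sum>k\<in>W. M i k * mpow W M' n k j) + (\<Sum>k\<in>W. if i = k then d * mpow W M' n k j else 0)"
      by (simp add: sum.distrib[symmetric] distrib_right) (intro sum.cong refl, simp)
    then show ?thesis using fin Suc.prems by (simp add: sum.delta)
  qed
  also have "(\<Sum>k\<in>W. M i k * mpow W M' n k j) = (\<Sum>k\<in>W. M i k * (\<Sum>l\<le>n. of_nat (n choose l) * d ^ (n - l) * mpow W M l k j))"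
    using Suc.IH by simp
  also have "\<dots> = (\<Sum>l\<le>n. of_nat (n choose l) * d ^ (n - l) * mpow W M (Suc l) i j)"
    by (simp add: mmult_def sum_distrib_left sum_distrib_right mult_ac) (rule sum.swap)
  finally show ?case
    using Suc.IH[OF Suc.prems] binom_step[of n d "\<lambda>l. mpow W M l i j"] by simp
qed

lemma exp_series_complex: "d ^ m / of_nat (fact m) = d ^ m /\<^sub>R fact m" for d :: complex
  by (simp add: scaleR_conv_of_real divide_inverse mult.commute)

lemma mexp_shift:
  assumes fin: "finite W" and hyp: "\<And>i j. i \<in> W \<Longrightarrow> j \<in> W \<Longrightarrow> M' i j = M i j + (if i = j then d else 0)"
    and iW: "i \<in> W"
  shows "mexp W M' i j = exp d * mexp W M i j"
proof -
  define p where "p l = mpow W M l i j / of_nat (fact l)" for l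
  define q where "q m = d ^ m / of_nat (fact m)" for m
  have trm: "mpow W M' n i j / of_nat (fact n) = (\<Sum>l\<le>n. p l * q (n - l))" for n
  proof -
    have "mpow W M' n i j / of_nat (fact n) = (\<Sum>l\<le>n. of_nat (n choose l) * d ^ (n - l) * mpow W M l i j / of_nat (fact n))"
      by (simp add: mpow_shift[OF fin hyp iW] sum_divide_distrib)
    also have "\<dots> = (\<Sum>l\<le>n. p l * q (n - l))"
    proof (intro sum.cong refl)
      fix l assume "l \<in> {..n}"
      then have ln: "l \<le> n" by simp
      have f: "(of_nat (fact n) :: complex) = of_nat (fact l) * of_nat (fact (n - l)) * of_nat (n choose l)"
        using binomial_fact_lemma[OF ln] by (metis of_nat_mult)
      show "of_nat (n choose l) * d ^ (n - l) * mpow W M l i j / of_nat (fact n) = p l * q (n - l)"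
        unfolding p_def q_def f
        using ln by (simp add: field_simps)
    qed
    finally show ?thesis .
  qed
  have "mexp W M' i j = (\<Sum>n. \<Sum>l\<le>n. p l * q (n - l))"
    unfolding mexp_def trm ..
  also have "\<dots> = (\<Sum>l. p l) * (\<Sum>m. q m)"
  proof (rule Cauchy_product[symmetric])
    show "summable (\<lambda>k. norm (p k))" unfolding p_def by (rule mpow_summable_norm[OF fin iW])
    show "summable (\<lambda>k. norm (q k))" unfolding q_def exp_series_complex using summable_norm_exp[of d] .
  qed
  also have "(\<Sum>m. q m) = exp d"
    unfolding q_def exp_series_complex exp_def ..
  also have "(\<Sum>l. p l) = mexp W M i j"
    unfolding p_def mexp_def ..
  finally show ?thesis by (simp add: mult.commute)
qed



definition gpath :: "'v set set \<Rightarrow> 'v list \<Rightarrow> bool" where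
  "gpath H ps \<longleftrightarrow> distinct ps \<and> (\<forall>i. Suc i < length ps \<longrightarrow> {ps!i, ps!Suc i} \<in> H)"

lemma card2_other:
  assumes "card f = 2" "z \<in> f" shows "\<exists>y. y \<noteq> z \<and> f = {z, y}"
proof -
  obtain a b where f: "f = {a, b}" "a \<noteq> b" using assms(1) by (auto simp: card_2_iff)
  then show ?thesis using assms(2) by auto
qed

lemma gpath_rev:
  assumes "gpath H ps" shows "gpath H (rev ps)"
  unfolding gpath_def
proof (intro conjI allI impI)
  show "distinct (rev ps)" using assms by (simp add: gpath_def)
  fix i assume i: "Suc i < length (rev ps)"
  let ?l = "length ps"
  have "{ps ! (?l - 2 - i), ps ! Suc (?l - 2 - i)} \<in> H"
    using assms i unfolding gpath_def by auto
  moreover have "Suc (?l - 2 - i) = ?l - 1 - i" using i by simp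
  ultimately show "{rev ps ! i, rev ps ! Suc i} \<in> H"
    using i by (simp add: rev_nth insert_commute numeral_2_eq_2)
qed

lemma end_cycle:
  assumes sg: "simple_graph V E" and HE: "H \<subseteq> E"
    and deg: "\<And>f v. f \<in> H \<Longrightarrow> v \<in> f \<Longrightarrow> \<exists>f'\<in>H. f' \<noteq> f \<and> v \<in> f'"
    and gp: "gpath H ps" and len: "length ps \<ge> 2"
    and mx: "\<And>y. y \<notin> set ps \<Longrightarrow> \<not> gpath H (ps @ [y])"
  shows "\<exists>j. j + 3 \<le> length ps \<and> is_cycle E (drop j ps)"
proof -
  define m where "m = length ps - 1"
  have lm: "length ps = Suc m" using len m_def by simp
  have m1: "m \<ge> 1" using len m_def by simp
  define f0 where "f0 = {ps!(m-1), ps!m}"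
  have f0H: "f0 \<in> H"
  proof -
    have "Suc (m - 1) < length ps" "Suc (m - 1) = m" using lm m1 by auto
    then show ?thesis using gp unfolding gpath_def f0_def by metis
  qed
  obtain f where fH: "f \<in> H" and ff0: "f \<noteq> f0" and zf: "ps!m \<in> f"
    using deg[OF f0H, of "ps!m"] unfolding f0_def by auto
  have "card f = 2" using fH HE sg unfolding simple_graph_def by auto
  then obtain y where yz: "y \<noteq> ps!m" and fy: "f = {ps!m, y}" using card2_other zf by metis
  have dps: "distinct ps" using gp gpath_def by auto
  have "y \<in> set ps"
  proof (rule ccontr)
    assume ny: "y \<notin> set ps"
    have "gpath H (ps @ [y])"
      unfolding gpath_def
    proof (intro conjI allI impI)
      show "distinct (ps @ [y])" using dps ny by simp
      fix i assume i: "Suc i < length (ps @ [y])"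
      show "{(ps @ [y]) ! i, (ps @ [y]) ! Suc i} \<in> H"
      proof (cases "Suc i < length ps")
        case True then show ?thesis using gp unfolding gpath_def by (simp add: nth_append)
      next
        case False
        then have "i = m" using i lm by simp
        then show ?thesis using fH fy lm by (simp add: nth_append)
      qed
    qed
    then show False using mx ny by blast
  qed
  then obtain j where j: "j < length ps" "ps ! j = y" by (auto simp: in_set_conv_nth)
  have "j \<noteq> m" using j yz by auto
  moreover have "j \<noteq> m - 1"
  proof
    assume "j = m - 1"
    then have "f = f0" using fy j unfolding f0_def by (simp add: insert_commute)
    then show False using ff0 by simp
  qed
  ultimately have jm: "j + 2 \<le> m" using j lm by linarith
  have "is_cycle E (drop j ps)"
    unfolding is_cycle_def
  proof (intro conjI allI impI)
    show "3 \<le> length (drop j ps)" using jm lm by simp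
    show "distinct (drop j ps)" using dps by simp
    fix i assume i: "i < length (drop j ps)"
    show "{drop j ps ! i, drop j ps ! ((i + 1) mod length (drop j ps))} \<in> E"
    proof (cases "Suc i < length (drop j ps)")
      case True
      then have "{ps ! (j + i), ps ! Suc (j + i)} \<in> H" using gp unfolding gpath_def by auto
      then show ?thesis using True HE by auto
    next
      case False
      then have "i = m - j" using i lm by simp
      moreover have "(m - j + 1) mod (Suc m - j) = 0" using jm by (simp add: Suc_diff_le)
      ultimately have "drop j ps ! i = ps ! m" "drop j ps ! ((i + 1) mod length (drop j ps)) = ps ! j"
        using jm lm by auto
      moreover have "{ps ! m, ps ! j} \<in> E" using fH fy j HE by auto
      ultimately show ?thesis by simp
    qed
  qed
  then show ?thesis using jm lm by (intro exI[of _ j]) simp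
qed



lemma mod_suc_cases: "i < n \<Longrightarrow> (Suc i) mod n = (if Suc i = n then 0 else Suc i)" for i n :: nat
  by auto

lemma odd_cycle_zero:
  fixes x :: "'v set \<Rightarrow> complex"
  assumes cyc: "is_cycle E vs" and odd: "odd (card (cycle_edges vs))"
    and finE: "finite E"
    and ker: "\<And>v. v \<in> set vs \<Longrightarrow> (\<Sum>f\<in>{f\<in>E. v \<in> f}. x f) = 0"
    and supp: "\<And>f. f \<in> E \<Longrightarrow> x f \<noteq> 0 \<Longrightarrow> f \<in> cycle_edges vs"
  shows "\<forall>f\<in>cycle_edges vs. x f = 0"
proof -
  define n where "n = length vs"
  define e where "e i = {vs!i, vs!((i+1) mod n)}" for i
  have n3: "n \<ge> 3" and dvs: "distinct vs" and eE: "\<And>i. i < n \<Longrightarrow> e i \<in> E"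
    using cyc unfolding is_cycle_def n_def e_def by auto
  have CE: "cycle_edges vs = e ` {..<n}" unfolding cycle_edges_def e_def n_def by auto
  have inj: "l = l'" if "l < n" "l' < n" "e l = e l'" for l l'
  proof -
    have p: "0 < length vs" using n3 n_def by linarith
    have b: "(Suc l) mod length vs < length vs" "(Suc l') mod length vs < length vs"
      using mod_less_divisor[OF p] by blast+
    have "vs!l = vs!l' \<and> vs!(Suc l mod n) = vs!(Suc l' mod n) \<or> vs!l = vs!(Suc l' mod n) \<and> vs!(Suc l mod n) = vs!l'"
      using that(3) unfolding e_def by (simp add: doubleton_eq_iff)
    then have "l = l' \<or> (l = Suc l' mod n \<and> Suc l mod n = l')"
      using nth_eq_iff_index_eq[OF dvs] that b unfolding n_def by metis
    then show ?thesis using that n3 by (auto simp: mod_suc_cases split: if_splits)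
  qed
  have cardC: "card (cycle_edges vs) = n"
    unfolding CE by (subst card_image) (auto intro: inj_onI inj)
  define prev where "prev i = (if i = 0 then n - 1 else i - 1)" for i
  have prev_lt: "i < n \<Longrightarrow> prev i < n" for i using n3 by (auto simp: prev_def)
  have mem: "vs!i \<in> e l \<longleftrightarrow> l = i \<or> l = prev i" if "i < n" "l < n" for i l
  proof -
    have "Suc l mod n < n" using n3 by auto
    then have "vs!i \<in> e l \<longleftrightarrow> i = l \<or> i = Suc l mod n"
      using dvs that unfolding e_def n_def by (auto simp: nth_eq_iff_index_eq)
    also have "\<dots> \<longleftrightarrow> l = i \<or> l = prev i"
      using that n3 by (auto simp: mod_suc_cases prev_def split: if_splits)
    finally show ?thesis .
  qed
  have eq: "x (e i) + x (e (prev i)) = 0" if i: "i < n" for i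
  proof -
    have vs: "vs!i \<in> set vs" using i n_def by auto
    have sub: "{f\<in>cycle_edges vs. vs!i \<in> f} = {e i, e (prev i)}"
      unfolding CE using mem[OF i] i prev_lt[OF i] by auto
    have neq: "e i \<noteq> e (prev i)"
      using inj[OF i prev_lt[OF i]] n3 i by (auto simp: prev_def split: if_splits)
    have "(\<Sum>f\<in>{f\<in>E. vs!i \<in> f}. x f) = (\<Sum>f\<in>{f\<in>cycle_edges vs. vs!i \<in> f}. x f)"
    proof (rule sum.mono_neutral_right)
      show "finite {f\<in>E. vs!i \<in> f}" using finE by simp
      show "{f\<in>cycle_edges vs. vs!i \<in> f} \<subseteq> {f\<in>E. vs!i \<in> f}" using CE eE by auto
      show "\<forall>f\<in>{f\<in>E. vs!i \<in> f} - {f\<in>cycle_edges vs. vs!i \<in> f}. x f = 0" using supp by auto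
    qed
    also have "\<dots> = x (e i) + x (e (prev i))" unfolding sub using neq by simp
    finally show ?thesis using ker[OF vs] by simp
  qed
  have alt: "i < n \<Longrightarrow> x (e i) = (-1)^i * x (e 0)" for i
  proof (induction i)
    case 0 then show ?case by simp
  next
    case (Suc i)
    have "x (e (Suc i)) = - x (e i)" using eq[OF Suc.prems] by (simp add: prev_def add_eq_0_iff)
    then show ?case using Suc by simp
  qed
  have "odd n" using odd cardC by simp
  then have ev: "even (n - 1)" using n3 by simp
  have "x (e 0) + x (e (n - 1)) = 0" using eq[of 0] n3 by (simp add: prev_def)
  then have "x (e 0) + x (e 0) = 0" using alt[of "n - 1"] ev n3 by simp
  then have x0: "x (e 0) = 0" by simp
  show ?thesis unfolding CE using alt x0 by auto
qed



lemma cycle_edges_mem: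
  assumes "v \<in> set vs" shows "\<exists>e\<in>cycle_edges vs. v \<in> e"
proof -
  obtain i where "i < length vs" "vs ! i = v" using assms by (auto simp: in_set_conv_nth)
  then show ?thesis unfolding cycle_edges_def by blast
qed

lemma cycle_edges_sub:
  assumes "e \<in> cycle_edges vs" shows "e \<subseteq> set vs"
proof -
  obtain i where i: "i < length vs" "e = {vs ! i, vs ! ((i + 1) mod length vs)}"
    using assms unfolding cycle_edges_def by blast
  have "(i + 1) mod length vs < length vs" by (rule mod_less_divisor) (use i in linarith)
  then show ?thesis using i by auto
qed

lemma kernel_zero:
  fixes x :: "'v set \<Rightarrow> complex"
  assumes sg: "simple_graph V E" and tu: "is_tree V E \<or> odd_unicyclic V E"
    and ker: "\<And>v. v \<in> V \<Longrightarrow> (\<Sum>f\<in>{f\<in>E. v \<in> f}. x f) = 0"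
  shows "\<forall>g\<in>E. x g = 0"
proof -
  define H where "H = {f\<in>E. x f \<noteq> 0}"
  have HE: "H \<subseteq> E" unfolding H_def by auto
  have finV: "finite V" using sg simple_graph_def by auto
  have EV: "\<And>f. f \<in> E \<Longrightarrow> f \<subseteq> V" using sg unfolding simple_graph_def by auto
  have finE: "finite E"
    by (rule finite_subset[of E "Pow V"]) (use EV finV in auto)
  have deg: "\<exists>f'\<in>H. f' \<noteq> f \<and> v \<in> f'" if fH: "f \<in> H" and vf: "v \<in> f" for f v
  proof (rule ccontr)
    assume nf: "\<not> ?thesis"
    have vV: "v \<in> V" using fH vf HE EV by auto
    have fin: "finite {f\<in>E. v \<in> f}" using finE by simp
    have "(\<Sum>f'\<in>{f\<in>E. v \<in> f}. x f') = x f + (\<Sum>f'\<in>{f\<in>E. v \<in> f} - {f}. x f')"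
      using fH vf HE by (subst sum.remove[OF fin, of f]) auto
    also have "(\<Sum>f'\<in>{f\<in>E. v \<in> f} - {f}. x f') = 0"
      using nf unfolding H_def by (intro sum.neutral) auto
    finally show False using ker[OF vV] fH unfolding H_def by simp
  qed
  have main: "\<exists>ps s j k. gpath H ps \<and> Suc s < length ps \<and> {ps!s, ps!Suc s} = g
      \<and> j + 3 \<le> length ps \<and> is_cycle E (drop j ps) \<and> k + 3 \<le> length ps \<and> is_cycle E (drop k (rev ps))"
    if gH: "g \<in> H" for g
  proof -
    have "card g = 2" using gH HE sg unfolding simple_graph_def by auto
    then obtain u w where g: "g = {u, w}" "u \<noteq> w" by (auto simp: card_2_iff)
    define P where "P ys \<longleftrightarrow> gpath H ys \<and> (\<exists>s. Suc s < length ys \<and> {ys!s, ys!Suc s} = g)" for ys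
    have P0: "P [u, w]"
    proof -
      have "\<forall>i. Suc i < length [u, w] \<longrightarrow> {[u, w]!i, [u, w]!Suc i} \<in> H"
        using g gH by (auto simp: less_Suc_eq)
      moreover have "Suc 0 < length [u, w] \<and> {[u, w]!0, [u, w]!Suc 0} = g" using g by simp
      moreover have "distinct [u, w]" using g by simp
      ultimately show ?thesis unfolding P_def gpath_def by blast
    qed
    have bound: "length ys < Suc (card V)" if "P ys" for ys
    proof -
      have setV: "set ys \<subseteq> V"
      proof
        fix v assume "v \<in> set ys"
        then obtain i where i: "i < length ys" "ys ! i = v" by (auto simp: in_set_conv_nth)
        have l2: "length ys \<ge> 2" using \<open>P ys\<close> unfolding P_def by auto
        show "v \<in> V"
        proof (cases "Suc i < length ys")
          case True
          then have "{ys!i, ys!Suc i} \<in> E" using \<open>P ys\<close> HE unfolding P_def gpath_def by auto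
          then show ?thesis using EV i by auto
        next
          case False
          then have "Suc (i - 1) < length ys" "Suc (i - 1) = i" using i l2 by auto
          then have "{ys!(i-1), ys!i} \<in> E" using \<open>P ys\<close> HE unfolding P_def gpath_def by (metis subsetD)
          then show ?thesis using EV i by auto
        qed
      qed
      have "length ys = card (set ys)" using \<open>P ys\<close> unfolding P_def gpath_def by (simp add: distinct_card)
      also have "\<dots> \<le> card V" using setV finV by (rule card_mono[rotated])
      finally show ?thesis by simp
    qed
    obtain ps where Pps: "P ps" and mxl: "\<And>ys. P ys \<Longrightarrow> length ys \<le> length ps"
      using ex_has_greatest_nat[of P "[u,w]" length "Suc (card V)"] P0 bound by blast
    obtain s where s: "Suc s < length ps" "{ps!s, ps!Suc s} = g" using Pps P_def by auto
    have gp: "gpath H ps" using Pps P_def by auto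
    have len: "length ps \<ge> 2" using s by simp
    have mx1: "\<not> gpath H (ps @ [y])" if "y \<notin> set ps" for y
    proof
      assume "gpath H (ps @ [y])"
      moreover have "Suc s < length (ps @ [y]) \<and> {(ps @ [y])!s, (ps @ [y])!Suc s} = g"
        using s by (simp add: nth_append)
      ultimately have "P (ps @ [y])" unfolding P_def by blast
      from mxl[OF this] show False by simp
    qed
    have mx2: "\<not> gpath H (rev ps @ [y])" if "y \<notin> set (rev ps)" for y
    proof
      assume "gpath H (rev ps @ [y])"
      from gpath_rev[OF this] have "gpath H (y # ps)" by simp
      moreover have "Suc (Suc s) < length (y # ps) \<and> {(y # ps)!Suc s, (y # ps)!Suc (Suc s)} = g"
        using s by simp
      ultimately have "P (y # ps)" unfolding P_def by blast
      from mxl[OF this] show False by simp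
    qed
    obtain j where j: "j + 3 \<le> length ps" "is_cycle E (drop j ps)"
      using end_cycle[OF sg HE deg gp len mx1] by blast
    obtain k where k: "k + 3 \<le> length (rev ps)" "is_cycle E (drop k (rev ps))"
      using end_cycle[OF sg HE deg gpath_rev[OF gp] _ mx2] len by auto
    show ?thesis using gp s j k by auto
  qed
  show ?thesis
  proof (cases "is_tree V E")
    case True
    show ?thesis
    proof (rule ballI, rule ccontr)
      fix g assume "g \<in> E" "x g \<noteq> 0"
      then have gH: "g \<in> H" unfolding H_def by auto
      have "\<exists>ps j. is_cycle E (drop j ps)" using main[OF gH] by auto
      then obtain ps j where "is_cycle E (drop j ps)" by blast
      then show False using True unfolding is_tree_def by blast
    qed
  next
    case False
    then have ou: "odd_unicyclic V E" using tu by simp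
    then obtain C where CC: "\<exists>vs. is_cycle E vs \<and> cycle_edges vs = C"
      and allC: "\<And>vs. is_cycle E vs \<Longrightarrow> cycle_edges vs = C" and oddC: "odd (card C)"
      unfolding odd_unicyclic_def by blast
    from CC obtain vs0 where vs0: "is_cycle E vs0" "cycle_edges vs0 = C" by blast
    have HC: "f \<in> C" if "f \<in> E" "x f \<noteq> 0" for f
    proof (rule ccontr)
      assume fC: "f \<notin> C"
      have "f \<in> H" using that H_def by auto
      from main[OF this] obtain ps s j k where gp: "gpath H ps" and s: "Suc s < length ps" "{ps!s, ps!Suc s} = f"
        and j: "j + 3 \<le> length ps" "is_cycle E (drop j ps)"
        and k: "k + 3 \<le> length ps" "is_cycle E (drop k (rev ps))"
        by blast
      have j0: "j \<noteq> 0"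
      proof
        assume "j = 0"
        then have "cycle_edges ps = C" using allC j by simp
        moreover have "f \<in> cycle_edges ps" unfolding cycle_edges_def using s
          by (intro CollectI exI[of _ s]) simp
        ultimately show False using fC by simp
      qed
      have ps0: "ps ! 0 \<in> set (drop k (rev ps))"
      proof -
        have "last (drop k (rev ps)) = last (rev ps)" using k by simp
        also have "\<dots> = ps ! 0"
        proof -
          have "ps \<noteq> []" using s by auto
          then show ?thesis by (simp add: last_rev hd_conv_nth)
        qed
        moreover have "drop k (rev ps) \<noteq> []" using k by simp
        ultimately show ?thesis using last_in_set by metis
      qed
      obtain e where e: "e \<in> cycle_edges (drop k (rev ps))" "ps ! 0 \<in> e"
        using cycle_edges_mem[OF ps0] by blast
      have "e \<in> cycle_edges (drop j ps)" using allC[OF k(2)] allC[OF j(2)] e(1) by simp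
      then have "ps ! 0 \<in> set (drop j ps)" using cycle_edges_sub e(2) by blast
      moreover have "ps ! 0 \<in> set (take j ps)"
      proof -
        have "take j ps ! 0 = ps ! 0" "0 < length (take j ps)" using j0 s by auto
        then show ?thesis by (metis nth_mem)
      qed
      moreover have "distinct ps" using gp gpath_def by auto
      ultimately show False
        using set_take_disj_set_drop_if_distinct[of ps j j] by blast
    qed
    have C0: "\<forall>f\<in>cycle_edges vs0. x f = 0"
    proof (rule odd_cycle_zero[OF vs0(1) _ finE])
      show "odd (card (cycle_edges vs0))" using vs0 oddC by simp
      fix v assume vs: "v \<in> set vs0"
      obtain e where "e \<in> cycle_edges vs0" "v \<in> e" using cycle_edges_mem[OF vs] by blast
      moreover have "cycle_edges vs0 \<subseteq> E"
      proof
        fix f assume "f \<in> cycle_edges vs0"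
        then obtain i where "i < length vs0" "f = {vs0 ! i, vs0 ! ((i + 1) mod length vs0)}"
          unfolding cycle_edges_def by blast
        then show "f \<in> E" using vs0(1) unfolding is_cycle_def by blast
      qed
      ultimately have "v \<in> V" using EV by auto
      then show "(\<Sum>f\<in>{f\<in>E. v \<in> f}. x f) = 0" by (rule ker)
    next
      fix f assume "f \<in> E" "x f \<noteq> 0" then show "f \<in> cycle_edges vs0" using HC vs0 by simp
    qed
    show ?thesis using C0 HC vs0 by auto
  qed
qed



lemma two_elem: assumes "card g = 2" "i \<in> g" "k \<in> g" "i \<noteq> k" shows "g = {i, k}"
proof -
  have "finite g" using assms(1) card.infinite by fastforce
  moreover have "{i, k} \<subseteq> g" using assms by auto
  moreover have "card {i, k} = card g" using assms by simp
  ultimately show ?thesis by (metis card_subset_eq)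
qed

lemma sum_ind: "finite V \<Longrightarrow> (\<Sum>k\<in>V. (if P k then 1 else 0 :: complex)) = of_nat (card {k\<in>V. P k})"
  by (simp add: sum.inter_filter[symmetric])

lemma graph_facts:
  assumes sg: "simple_graph V E"
  defines "N \<equiv> \<lambda>v f. (if v \<in> f then 1 else 0 :: complex)"
  shows Q_eq: "\<And>i k. i \<in> V \<Longrightarrow> k \<in> V \<Longrightarrow> signless_laplacian E i k = (\<Sum>g\<in>E. N i g * N k g)"
    and B_eq: "\<And>g f. g \<in> E \<Longrightarrow> f \<in> E \<Longrightarrow> (\<Sum>k\<in>V. N k g * N k f) = line_graph_adj E g f + (if g = f then 2 else 0)"
proof -
  have finV: "finite V" using sg simple_graph_def by auto
  have EV: "\<And>f. f \<in> E \<Longrightarrow> f \<subseteq> V" and c2: "\<And>f. f \<in> E \<Longrightarrow> card f = 2"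
    using sg unfolding simple_graph_def by auto
  have finE: "finite E" by (rule finite_subset[of E "Pow V"]) (use EV finV in auto)
  fix i k assume iV: "i \<in> V" and kV: "k \<in> V"
  have "(\<Sum>g\<in>E. N i g * N k g) = (\<Sum>g\<in>E. if i \<in> g \<and> k \<in> g then 1 else 0)"
    unfolding N_def by (intro sum.cong) auto
  also have "\<dots> = of_nat (card {g\<in>E. i \<in> g \<and> k \<in> g})" by (rule sum_ind[OF finE])
  also have "\<dots> = signless_laplacian E i k"
  proof (cases "i = k")
    case True then show ?thesis by (simp add: signless_laplacian_def degree_def)
  next
    case False
    have "{g\<in>E. i \<in> g \<and> k \<in> g} = (if {i, k} \<in> E then {{i, k}} else {})"
    proof (cases "{i, k} \<in> E")
      case True
      have "{g\<in>E. i \<in> g \<and> k \<in> g} = {{i, k}}"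
      proof (intro equalityI subsetI)
        fix g assume "g \<in> {g\<in>E. i \<in> g \<and> k \<in> g}"
        then have "g \<in> E" "i \<in> g" "k \<in> g" by auto
        then have "g = {i, k}" using two_elem[OF c2[OF \<open>g \<in> E\<close>] _ _ False] by blast
        then show "g \<in> {{i, k}}" by simp
      next
        fix g assume "g \<in> {{i, k}}"
        then show "g \<in> {g\<in>E. i \<in> g \<and> k \<in> g}" using True by simp
      qed
      then show ?thesis using True by simp
    next
      case nE: False
      have "{g\<in>E. i \<in> g \<and> k \<in> g} = {}"
      proof (intro equalityI subsetI)
        fix g assume "g \<in> {g\<in>E. i \<in> g \<and> k \<in> g}"
        then have "g \<in> E" "i \<in> g" "k \<in> g" by auto
        then have "g = {i, k}" using two_elem[OF c2[OF \<open>g \<in> E\<close>] _ _ False] by blast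
        then show "g \<in> {}" using nE \<open>g \<in> E\<close> by simp
      qed simp
      then show ?thesis using nE by simp
    qed
    then show ?thesis using False by (simp add: signless_laplacian_def)
  qed
  finally show "signless_laplacian E i k = (\<Sum>g\<in>E. N i g * N k g)" ..
next
  have finV: "finite V" using sg simple_graph_def by auto
  have EV: "\<And>f. f \<in> E \<Longrightarrow> f \<subseteq> V" and c2: "\<And>f. f \<in> E \<Longrightarrow> card f = 2"
    using sg unfolding simple_graph_def by auto
  fix g f assume gE: "g \<in> E" and fE: "f \<in> E"
  have "(\<Sum>k\<in>V. N k g * N k f) = (\<Sum>k\<in>V. if k \<in> g \<inter> f then 1 else 0)"
    unfolding N_def by (intro sum.cong) auto
  also have "\<dots> = of_nat (card {k\<in>V. k \<in> g \<inter> f})" by (rule sum_ind[OF finV])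
  also have "{k\<in>V. k \<in> g \<inter> f} = g \<inter> f" using EV[OF gE] by auto
  also have "of_nat (card (g \<inter> f)) = line_graph_adj E g f + (if g = f then 2 else 0)"
  proof (cases "g = f")
    case True then show ?thesis using c2[OF gE] by (simp add: line_graph_adj_def)
  next
    case False
    have fin: "finite (g \<inter> f)" using c2[OF gE] card.infinite by fastforce
    have le1: "card (g \<inter> f) \<le> 1"
    proof (rule ccontr)
      assume "\<not> card (g \<inter> f) \<le> 1"
      then have "\<not> (\<forall>a\<in>g \<inter> f. \<forall>b\<in>g \<inter> f. a = b)"
        using card_le_Suc0_iff_eq[OF fin] by simp
      then obtain a b where ab: "a \<in> g \<inter> f" "b \<in> g \<inter> f" "a \<noteq> b" by blast
      have "g = {a, b}" using two_elem[OF c2[OF gE]] ab by blast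
      moreover have "f = {a, b}" using two_elem[OF c2[OF fE]] ab by blast
      ultimately have "g = f" by simp
      then show False using False by simp
    qed
    show ?thesis
    proof (cases "g \<inter> f = {}")
      case True then show ?thesis using False by (simp add: line_graph_adj_def)
    next
      case ne: False
      then have "card (g \<inter> f) = 1" using le1 fin by (simp add: Suc_le_eq card_gt_0_iff le_antisym)
      then show ?thesis using False ne by (simp add: line_graph_adj_def)
    qed
  qed
  finally show "(\<Sum>k\<in>V. N k g * N k f) = line_graph_adj E g f + (if g = f then 2 else 0)" .
qed



theorem mainTheorem11:
  fixes V :: "'v set" and E :: "'v set set" and a b \<alpha> \<beta> :: 'v
  assumes "simple_graph V E"
    and "is_tree V E \<or> odd_unicyclic V E"
    and "{a, b} \<in> E" and "{\<alpha>, \<beta>} \<in> E"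
  shows "PST V (signless_laplacian E)
            (\<lambda>i. basis_vec a i + basis_vec b i) (\<lambda>i. basis_vec \<alpha> i + basis_vec \<beta> i)
         \<longleftrightarrow> PST E (line_graph_adj E) (basis_vec {a, b}) (basis_vec {\<alpha>, \<beta>})"
proof -
  note sg = assms(1)
  define N :: "'v \<Rightarrow> 'v set \<Rightarrow> complex" where "N = (\<lambda>v f. (if v \<in> f then 1 else 0))"
  have finV: "finite V" using sg simple_graph_def by auto
  have EV: "\<And>f. f \<in> E \<Longrightarrow> f \<subseteq> V" and c2: "\<And>f. f \<in> E \<Longrightarrow> card f = 2"
    using sg unfolding simple_graph_def by auto
  have finE: "finite E" by (rule finite_subset[of E "Pow V"]) (use EV finV in auto)
  have ab: "a \<noteq> b" using c2[OF assms(3)] by (cases "a = b") auto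
  have \<alpha>\<beta>: "\<alpha> \<noteq> \<beta>" using c2[OF assms(4)] by (cases "\<alpha> = \<beta>") auto
  have u: "basis_vec a j + basis_vec b j = N j {a, b}" for j
    using ab unfolding basis_vec_def N_def by auto
  have w: "basis_vec \<alpha> j + basis_vec \<beta> j = N j {\<alpha>, \<beta>}" for j
    using \<alpha>\<beta> unfolding basis_vec_def N_def by auto
  have Qe: "\<And>i k. i \<in> V \<Longrightarrow> k \<in> V \<Longrightarrow> signless_laplacian E i k = (\<Sum>g\<in>E. N i g * N k g)"
    using graph_facts(1)[OF sg] unfolding N_def by blast
  have Be: "\<And>g f. g \<in> E \<Longrightarrow> f \<in> E \<Longrightarrow> (\<Sum>k\<in>V. N k g * N k f) = line_graph_adj E g f + (if g = f then 2 else 0)"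
    using graph_facts(2)[OF sg] unfolding N_def by blast
  have key: "(\<Sum>j\<in>V. evol V (signless_laplacian E) t i j * N j e)
      = exp (- \<i> * of_real t * 2) * (\<Sum>f\<in>E. N i f * evol E (line_graph_adj E) t f e)"
    if iV: "i \<in> V" and eE: "e \<in> E" for t i e
  proof -
    define c where "c = - \<i> * of_real t"
    define R where "R = (\<lambda>g f. c * (\<Sum>k\<in>V. N k g * N k f))"
    have hyp: "(\<Sum>k\<in>V. c * signless_laplacian E i k * N k f) = (\<Sum>g\<in>E. N i g * R g f)"
      if "i \<in> V" "f \<in> E" for i f
    proof -
      have "(\<Sum>k\<in>V. c * signless_laplacian E i k * N k f) = (\<Sum>k\<in>V. \<Sum>g\<in>E. c * (N i g * (N k g * N k f)))"
        using Qe[OF that(1)] by (simp add: sum_distrib_left sum_distrib_right mult_ac)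
      also have "\<dots> = (\<Sum>g\<in>E. N i g * R g f)"
        unfolding R_def by (subst sum.swap) (simp add: sum_distrib_left mult_ac)
      finally show ?thesis .
    qed
    have "(\<Sum>j\<in>V. evol V (signless_laplacian E) t i j * N j e) = (\<Sum>f\<in>E. N i f * mexp E R f e)"
      unfolding evol_def c_def[symmetric]
      by (rule mexp_intertwine[OF finV finE _ iV eE]) (use hyp in simp)
    also have "\<dots> = (\<Sum>f\<in>E. N i f * (exp (c * 2) * evol E (line_graph_adj E) t f e))"
    proof (intro sum.cong refl)
      fix f assume fE: "f \<in> E"
      have "mexp E R f e = exp (c * 2) * mexp E (\<lambda>i j. c * line_graph_adj E i j) f e"
        by (rule mexp_shift[OF finE _ fE]) (simp add: R_def Be algebra_simps)
      then show "N i f * mexp E R f e = N i f * (exp (c * 2) * evol E (line_graph_adj E) t f e)"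
        unfolding evol_def c_def by simp
    qed
    also have "\<dots> = exp (c * 2) * (\<Sum>f\<in>E. N i f * evol E (line_graph_adj E) t f e)"
      by (simp add: sum_distrib_left mult_ac)
    finally show ?thesis unfolding c_def .
  qed
  have nex: "cmod (exp (- \<i> * of_real t * 2)) = 1" for t by simp
  have lineL: "(\<Sum>g\<in>E. evol E (line_graph_adj E) t f g * basis_vec {a, b} g) = evol E (line_graph_adj E) t f {a, b}" for t f
  proof -
    have "(\<Sum>g\<in>E. evol E (line_graph_adj E) t f g * basis_vec {a, b} g) = (\<Sum>g\<in>E. if g = {a, b} then evol E (line_graph_adj E) t f g else 0)"
      unfolding basis_vec_def by (intro sum.cong) auto
    then show ?thesis using finE assms(3) by (simp add: sum.delta')
  qed
  have lhsE: "(\<Sum>j\<in>V. evol V (signless_laplacian E) t i j * (basis_vec a j + basis_vec b j))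
     = exp (- \<i> * of_real t * 2) * (\<Sum>f\<in>E. N i f * evol E (line_graph_adj E) t f {a, b})"
    if "i \<in> V" for t i
    unfolding u using key[OF that assms(3)] .
  show ?thesis
  proof
    assume "PST V (signless_laplacian E) (\<lambda>i. basis_vec a i + basis_vec b i) (\<lambda>i. basis_vec \<alpha> i + basis_vec \<beta> i)"
    then obtain t \<eta> where t: "t > 0" and \<eta>: "cmod \<eta> = 1"
      and H: "\<And>i. i \<in> V \<Longrightarrow> (\<Sum>j\<in>V. evol V (signless_laplacian E) t i j * (basis_vec a j + basis_vec b j)) = \<eta> * (basis_vec \<alpha> i + basis_vec \<beta> i)"
      unfolding PST_def by blast
    define ex where "ex = exp (- \<i> * of_real t * 2)"
    have ex0: "ex \<noteq> 0" unfolding ex_def by simp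
    define y where "y f = ex * evol E (line_graph_adj E) t f {a, b} - \<eta> * basis_vec {\<alpha>, \<beta>} f" for f
    have ker: "(\<Sum>f\<in>{f\<in>E. v \<in> f}. y f) = 0" if vV: "v \<in> V" for v
    proof -
      have "(\<Sum>f\<in>{f\<in>E. v \<in> f}. y f) = (\<Sum>f\<in>E. N v f * y f)"
      proof -
        have "(\<Sum>f\<in>E. N v f * y f) = (\<Sum>f\<in>E. if v \<in> f then y f else 0)"
          unfolding N_def by (intro sum.cong) auto
        then show ?thesis using finE by (simp add: sum.inter_filter)
      qed
      also have "\<dots> = ex * (\<Sum>f\<in>E. N v f * evol E (line_graph_adj E) t f {a, b}) - \<eta> * (\<Sum>f\<in>E. N v f * basis_vec {\<alpha>, \<beta>} f)"
        unfolding y_def by (simp add: sum_distrib_left sum_subtractf right_diff_distrib mult_ac)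
      also have "(\<Sum>f\<in>E. N v f * basis_vec {\<alpha>, \<beta>} f) = N v {\<alpha>, \<beta>}"
      proof -
        have "(\<Sum>f\<in>E. N v f * basis_vec {\<alpha>, \<beta>} f) = (\<Sum>f\<in>E. if f = {\<alpha>, \<beta>} then N v f else 0)"
          unfolding basis_vec_def by (intro sum.cong) auto
        then show ?thesis using finE assms(4) by (simp add: sum.delta')
      qed
      also have "ex * (\<Sum>f\<in>E. N v f * evol E (line_graph_adj E) t f {a, b}) = \<eta> * N v {\<alpha>, \<beta>}"
        using H[OF vV] lhsE[OF vV, of t] w unfolding ex_def by simp
      finally show ?thesis by simp
    qed
    have y0: "\<forall>g\<in>E. y g = 0" by (rule kernel_zero[OF sg assms(2)]) (use ker in blast)
    show "PST E (line_graph_adj E) (basis_vec {a, b}) (basis_vec {\<alpha>, \<beta>})"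
      unfolding PST_def
    proof (intro exI conjI ballI)
      show "t > 0" by fact
      show "cmod (\<eta> / ex) = 1" using \<eta> nex[of t] unfolding ex_def by (simp add: norm_divide)
      fix f assume fE: "f \<in> E"
      have "ex * evol E (line_graph_adj E) t f {a, b} = \<eta> * basis_vec {\<alpha>, \<beta>} f"
        using y0 fE unfolding y_def by simp
      then have "evol E (line_graph_adj E) t f {a, b} = \<eta> / ex * basis_vec {\<alpha>, \<beta>} f"
        using ex0 by (simp add: field_simps)
      then show "(\<Sum>g\<in>E. evol E (line_graph_adj E) t f g * basis_vec {a, b} g) = \<eta> / ex * basis_vec {\<alpha>, \<beta>} f"
        using lineL by simp
    qed
  next
    assume "PST E (line_graph_adj E) (basis_vec {a, b}) (basis_vec {\<alpha>, \<beta>})"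
    then obtain t \<eta> where t: "t > 0" and \<eta>: "cmod \<eta> = 1"
      and H: "\<And>f. f \<in> E \<Longrightarrow> (\<Sum>g\<in>E. evol E (line_graph_adj E) t f g * basis_vec {a, b} g) = \<eta> * basis_vec {\<alpha>, \<beta>} f"
      unfolding PST_def by blast
    define ex where "ex = exp (- \<i> * of_real t * 2)"
    show "PST V (signless_laplacian E) (\<lambda>i. basis_vec a i + basis_vec b i) (\<lambda>i. basis_vec \<alpha> i + basis_vec \<beta> i)"
      unfolding PST_def
    proof (intro exI conjI ballI)
      show "t > 0" by fact
      show "cmod (ex * \<eta>) = 1" using \<eta> nex[of t] unfolding ex_def by (simp add: norm_mult)
      fix i assume iV: "i \<in> V"
      have "(\<Sum>f\<in>E. N i f * evol E (line_graph_adj E) t f {a, b}) = (\<Sum>f\<in>E. N i f * (\<eta> * basis_vec {\<alpha>, \<beta>} f))"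
        using H lineL by (intro sum.cong) auto
      also have "\<dots> = (\<Sum>f\<in>E. if f = {\<alpha>, \<beta>} then \<eta> * N i f else 0)"
        unfolding basis_vec_def by (intro sum.cong) auto
      also have "\<dots> = \<eta> * N i {\<alpha>, \<beta>}" using finE assms(4) by (simp add: sum.delta')
      finally show "(\<Sum>j\<in>V. evol V (signless_laplacian E) t i j * (basis_vec a j + basis_vec b j)) = ex * \<eta> * (basis_vec \<alpha> i + basis_vec \<beta> i)"
        using lhsE[OF iV, of t] w unfolding ex_def by simp
    qed
  qed
qed


end
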